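(* Let $X$ be a finite topological space and $x,y\in X$ with $\Psi(x,y)=k$. If $(U_j)_{j\ge0}$ is any nested sequence of open sets around $x$ with $y\in U_k$, then $U_k=U_x\cup U_y$.
   Context: For a finite topological space $X$ and $x\in X$, $U_x$ denotes the minimal open set containing $x$ (the intersection of all open sets containing $x$). A nested sequence of open sets around $x$ is a finite sequence $U_0\subsetneq U_1\subsetneq\cdots\subsetneq U_m=X$ of open sets with $U_0=U_x$ such that for each $j$ there is no open set $V$ with $U_j\subsetneq V\subsetneq U_{j+1}$. The furtherness function $\Psi:X\times X\to\{0,1,\dots,|X|-1\}$ is defined by: $\Psi(x,y)$ is the smallest integer $k\ge 0$ such that there exists a nested sequence $(U_j)_{j\ge0}$ of open sets around $x$ with $y\in U_k$. *)

theory Defs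
  imports "HOL-Analysis.Analysis"
begin

definition minopen :: "'a topology \<Rightarrow> 'a \<Rightarrow> 'a set" where
  "minopen T x = \<Inter>{U. openin T U \<and> x \<in> U}"

definition nested_seq :: "'a topology \<Rightarrow> 'a \<Rightarrow> (nat \<Rightarrow> 'a set) \<Rightarrow> nat \<Rightarrow> bool" where
  "nested_seq T x U m \<longleftrightarrow>
     U 0 = minopen T x \<and> U m = topspace T \<and>
     (\<forall>j\<le>m. openin T (U j)) \<and>
     (\<forall>j<m. U j \<subset> U (Suc j) \<and>
            \<not> (\<exists>V. openin T V \<and> U j \<subset> V \<and> V \<subset> U (Suc j)))"

definition Psi :: "'a topology \<Rightarrow> 'a \<Rightarrow> 'a \<Rightarrow> nat" where
  "Psi T x y = (LEAST k. \<exists>U m. nested_seq T x U m \<and> k \<le> m \<and> y \<in> U k)"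

end

theory Submission
  imports Defs
begin

definition ochain :: "'a topology \<Rightarrow> 'a set \<Rightarrow> 'a set \<Rightarrow> (nat \<Rightarrow> 'a set) \<Rightarrow> nat \<Rightarrow> bool" where
  "ochain T A B V n \<longleftrightarrow> V 0 = A \<and> V n = B \<and> (\<forall>j\<le>n. openin T (V j)) \<and>
     (\<forall>j<n. V j \<subset> V (Suc j) \<and> \<not> (\<exists>W. openin T W \<and> V j \<subset> W \<and> W \<subset> V (Suc j)))"

lemma nested_ochain: "nested_seq T x U m = ochain T (minopen T x) (topspace T) U m"
  unfolding nested_seq_def ochain_def by blast

definition rk :: "'a topology \<Rightarrow> 'a set \<Rightarrow> nat" where
  "rk T S = card (minopen T ` S)"

lemma minopen_mem: "z \<in> topspace T \<Longrightarrow> z \<in> minopen T z"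
  unfolding minopen_def by auto

lemma minopen_sub: "openin T V \<Longrightarrow> z \<in> V \<Longrightarrow> minopen T z \<subseteq> V"
  unfolding minopen_def by auto

lemma minopen_open:
  assumes "finite (topspace T)" "z \<in> topspace T"
  shows "openin T (minopen T z)"
proof -
  have "{U. openin T U \<and> z \<in> U} \<subseteq> Pow (topspace T)" using openin_subset[of T] by blast
  hence "finite {U. openin T U \<and> z \<in> U}" using assms(1) finite_subset by blast
  moreover have "topspace T \<in> {U. openin T U \<and> z \<in> U}" using assms(2) by auto
  ultimately show ?thesis unfolding minopen_def
    by (intro openin_Inter) auto
qed

lemma minopen_mono:
  assumes "finite (topspace T)" "z \<in> topspace T" "w \<in> minopen T z"
  shows "minopen T w \<subseteq> minopen T z"
  using minopen_sub[OF minopen_open[OF assms(1,2)] assms(3)] .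

lemma cover_rank:
  assumes fin: "finite (topspace T)" and oA: "openin T A" and oB: "openin T B"
    and AB: "A \<subset> B" and cov: "\<not> (\<exists>W. openin T W \<and> A \<subset> W \<and> W \<subset> B)"
  shows "rk T B = Suc (rk T A)"
proof -
  have Bt: "B \<subseteq> topspace T" using oB openin_subset by auto
  have key: "A \<union> minopen T w = B" if w: "w \<in> B - A" for w
  proof -
    have wt: "w \<in> topspace T" using w Bt by auto
    have "openin T (A \<union> minopen T w)" using oA minopen_open[OF fin wt] by auto
    moreover have "A \<subset> A \<union> minopen T w" using minopen_mem[OF wt] w by auto
    moreover have "A \<union> minopen T w \<subseteq> B" using minopen_sub[OF oB] w AB by auto
    ultimately show ?thesis using cov by blast
  qed
  obtain z where z: "z \<in> B - A" using AB by auto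
  have zt: "z \<in> topspace T" using z Bt by auto
  have img: "minopen T ` B = insert (minopen T z) (minopen T ` A)"
  proof
    show "minopen T ` B \<subseteq> insert (minopen T z) (minopen T ` A)"
    proof
      fix M assume "M \<in> minopen T ` B"
      then obtain w where w: "w \<in> B" "M = minopen T w" by auto
      show "M \<in> insert (minopen T z) (minopen T ` A)"
      proof (cases "w \<in> A")
        case True then show ?thesis using w by auto
      next
        case False
        have wt: "w \<in> topspace T" using w Bt by auto
        have "w \<in> minopen T z" using key[OF z] w False by auto
        hence 1: "minopen T w \<subseteq> minopen T z" using minopen_mono[OF fin zt] by auto
        have "z \<in> minopen T w" using key[of w] w False z by auto
        hence "minopen T z \<subseteq> minopen T w" using minopen_mono[OF fin wt] by auto
        with 1 show ?thesis using w by auto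
      qed
    qed
  next
    show "insert (minopen T z) (minopen T ` A) \<subseteq> minopen T ` B" using z AB by auto
  qed
  have notin: "minopen T z \<notin> minopen T ` A"
  proof
    assume "minopen T z \<in> minopen T ` A"
    then obtain a where a: "a \<in> A" "minopen T z = minopen T a" by auto
    have "z \<in> minopen T a" using a minopen_mem[OF zt] by auto
    thus False using minopen_sub[OF oA a(1)] z by auto
  qed
  have "finite A" using AB Bt fin by (meson finite_subset psubset_imp_subset order_trans)
  hence "finite (minopen T ` A)" by simp
  thus ?thesis unfolding rk_def using img notin by simp
qed

lemma strict_rank:
  assumes fin: "finite (topspace T)" and oW: "openin T W" and oB: "openin T B" and WB: "W \<subset> B"
  shows "rk T W < rk T B"
proof -
  have Bt: "B \<subseteq> topspace T" using oB openin_subset by auto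
  obtain z where z: "z \<in> B - W" using WB by auto
  have zt: "z \<in> topspace T" using z Bt by auto
  have "minopen T z \<notin> minopen T ` W"
  proof
    assume "minopen T z \<in> minopen T ` W"
    then obtain a where a: "a \<in> W" "minopen T z = minopen T a" by auto
    have "z \<in> minopen T a" using a minopen_mem[OF zt] by auto
    thus False using minopen_sub[OF oW a(1)] z by auto
  qed
  hence "minopen T ` W \<subset> minopen T ` B" using WB z by auto
  moreover have "finite B" using Bt fin finite_subset by blast
  hence "finite (minopen T ` B)" by simp
  ultimately show ?thesis unfolding rk_def by (simp add: psubset_card_mono)
qed

lemma chain_rank:
  assumes fin: "finite (topspace T)" and ch: "ochain T A B V n"
  shows "j \<le> n \<Longrightarrow> rk T (V j) = rk T A + j"
proof (induction j)
  case 0 then show ?case using ch unfolding ochain_def by auto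
next
  case (Suc j)
  have "j < n" using Suc by auto
  have o1: "openin T (V j)" "openin T (V (Suc j))" using ch Suc.prems unfolding ochain_def by simp_all
  have "V j \<subset> V (Suc j) \<and> \<not> (\<exists>W. openin T W \<and> V j \<subset> W \<and> W \<subset> V (Suc j))"
    using ch \<open>j < n\<close> unfolding ochain_def by blast
  hence "rk T (V (Suc j)) = Suc (rk T (V j))"
    using cover_rank[OF fin o1] by blast
  then show ?case using Suc by auto
qed

lemma chain_mono:
  assumes ch: "ochain T A B V n"
  shows "j \<le> n \<Longrightarrow> A \<subseteq> V j"
proof (induction j)
  case 0 then show ?case using ch unfolding ochain_def by auto
next
  case (Suc j)
  have "j < n" using Suc.prems by simp
  hence "V j \<subseteq> V (Suc j)" using ch unfolding ochain_def by blast
  then show ?case using Suc by simp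
qed

lemma exists_cover:
  assumes fin: "finite (topspace T)" and oA: "openin T A" and oB: "openin T B" and AB: "A \<subset> B"
  shows "\<exists>C. openin T C \<and> A \<subset> C \<and> C \<subseteq> B \<and> \<not> (\<exists>W. openin T W \<and> A \<subset> W \<and> W \<subset> C)"
proof -
  let ?S = "{C. openin T C \<and> A \<subset> C \<and> C \<subseteq> B}"
  have "?S \<subseteq> Pow (topspace T)" using openin_subset[of T] by blast
  moreover have "finite (Pow (topspace T))" using fin by simp
  ultimately have "finite ?S" by (rule finite_subset)
  moreover have "B \<in> ?S" using oB AB by simp
  hence "?S \<noteq> {}" by blast
  ultimately have "\<exists>m\<in>?S. \<forall>b\<in>?S. b \<le> m \<longrightarrow> m = b" by (rule finite_has_minimal)
  then obtain C where C: "C \<in> ?S" and Cm0: "\<forall>b\<in>?S. b \<le> C \<longrightarrow> C = b"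
    by (rule bexE)
  have Cm: "C = D" if "D \<in> ?S" "D \<le> C" for D using Cm0 that by blast
  have nc: "\<not> (\<exists>W. openin T W \<and> A \<subset> W \<and> W \<subset> C)"
  proof
    assume "\<exists>W. openin T W \<and> A \<subset> W \<and> W \<subset> C"
    then obtain W where W: "openin T W" "A \<subset> W" "W \<subset> C" by blast
    have "W \<subseteq> B" using W(3) C by blast
    hence "W \<in> ?S" using W(1,2) by blast
    hence "C = W" using Cm W(3) by blast
    thus False using W(3) by simp
  qed
  from C have "openin T C" "A \<subset> C" "C \<subseteq> B" by simp_all
  with nc show ?thesis by (intro exI[of _ C]) simp
qed

lemma exists_chain:
  assumes fin: "finite (topspace T)"
  shows "openin T A \<Longrightarrow> openin T W \<Longrightarrow> A \<subseteq> W \<Longrightarrow>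
    \<exists>V n r. ochain T A (topspace T) V n \<and> r \<le> n \<and> V r = W"
proof (induction "card (topspace T - A)" arbitrary: A W rule: less_induct)
  case less
  have At: "A \<subseteq> topspace T" using openin_subset[OF less.prems(1)] .
  show ?case
  proof (cases "A = topspace T")
    case True
    hence "W = A" using less.prems(3) openin_subset[OF less.prems(2)] by blast
    then show ?thesis using True less.prems
      by (intro exI[of _ "\<lambda>_. A"] exI[of _ 0] exI[of _ 0]) (auto simp: ochain_def)
  next
    case False
    define B where "B = (if W = A then topspace T else W)"
    have oB: "openin T B" "A \<subset> B" using less.prems False At unfolding B_def by auto
    obtain C where C: "openin T C" "A \<subset> C" "C \<subseteq> B" "\<not> (\<exists>W. openin T W \<and> A \<subset> W \<and> W \<subset> C)"
      using exists_cover[OF fin less.prems(1) oB] by blast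
    have Ct: "C \<subseteq> topspace T" using openin_subset[OF C(1)] .
    have lt: "card (topspace T - C) < card (topspace T - A)"
    proof (rule psubset_card_mono)
      show "finite (topspace T - A)" using fin by simp
      show "topspace T - C \<subset> topspace T - A" using C(2) Ct At by blast
    qed
    define W' where "W' = (if W = A then C else W)"
    have "openin T W'" "C \<subseteq> W'" using C(3) less.prems(2) C(1)
      by (cases "W = A"; simp add: W'_def B_def)+
    then obtain V n r where V: "ochain T C (topspace T) V n" "r \<le> n" "V r = W'"
      using less.hyps[OF lt C(1)] by blast
    have V0: "V 0 = C" and Vn: "V n = topspace T" and Vo: "\<And>j. j \<le> n \<Longrightarrow> openin T (V j)"
      and Vs: "\<And>j. j < n \<Longrightarrow> V j \<subset> V (Suc j)"
      and Vc: "\<And>j. j < n \<Longrightarrow> \<not> (\<exists>W. openin T W \<and> V j \<subset> W \<and> W \<subset> V (Suc j))"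
      using V(1) unfolding ochain_def by blast+
    define V' where "V' = (\<lambda>i. if i = 0 then A else V (i - 1))"
    define r' where "r' = (if W = A then 0 else Suc r)"
    have "ochain T A (topspace T) V' (Suc n)"
      unfolding ochain_def
    proof (intro conjI allI impI)
      show "V' 0 = A" by (simp add: V'_def)
      show "V' (Suc n) = topspace T" using Vn by (simp add: V'_def)
    next
      fix j assume j: "j \<le> Suc n"
      show "openin T (V' j)"
      proof (cases j)
        case 0 then show ?thesis using less.prems(1) by (simp add: V'_def)
      next
        case (Suc i) then show ?thesis using Vo[of i] j by (simp add: V'_def)
      qed
    next
      fix j assume j: "j < Suc n"
      show "V' j \<subset> V' (Suc j)"
      proof (cases j)
        case 0 then show ?thesis using C(2) V0 by (simp add: V'_def)
      next
        case (Suc i) then show ?thesis using Vs[of i] j by (simp add: V'_def)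
      qed
      show "\<not> (\<exists>Wa. openin T Wa \<and> V' j \<subset> Wa \<and> Wa \<subset> V' (Suc j))"
      proof (cases j)
        case 0 then show ?thesis using C(4) V0 by (simp add: V'_def)
      next
        case (Suc i) then show ?thesis using Vc[of i] j by (simp add: V'_def)
      qed
    qed
    moreover have "r' \<le> Suc n" using V(2) by (simp add: r'_def)
    moreover have "V' r' = W" using V(3) by (cases "W = A") (simp_all add: r'_def V'_def W'_def)
    ultimately show ?thesis by blast
  qed
qed

theorem mainTheorem5:
  fixes T :: "'a topology" and x y :: 'a and k m :: nat and U :: "nat \<Rightarrow> 'a set"
  assumes "finite (topspace T)"
    and "x \<in> topspace T" and "y \<in> topspace T"
    and "Psi T x y = k"
    and "nested_seq T x U m" and "k \<le> m" and "y \<in> U k"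
  shows "U k = minopen T x \<union> minopen T y"
proof (rule ccontr)
  assume ne: "U k \<noteq> minopen T x \<union> minopen T y"
  note fin = assms(1)
  have ch: "ochain T (minopen T x) (topspace T) U m" using assms(5) unfolding nested_ochain .
  have oUk: "openin T (U k)" using ch assms(6) unfolding ochain_def by blast
  define W where "W = minopen T x \<union> minopen T y"
  have oW: "openin T W" unfolding W_def
    using openin_Un[OF minopen_open[OF fin assms(2)] minopen_open[OF fin assms(3)]] .
  have s1: "minopen T x \<subseteq> U k" using chain_mono[OF ch assms(6)] .
  have s2: "minopen T y \<subseteq> U k" using minopen_sub[OF oUk assms(7)] .
  have "W \<subseteq> U k" unfolding W_def using s1 s2 by (rule Un_least)
  hence WU: "W \<subset> U k" using ne unfolding W_def by blast
  have "minopen T x \<subseteq> W" unfolding W_def by (rule Un_upper1)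
  then obtain V n r where V: "ochain T (minopen T x) (topspace T) V n" "r \<le> n" "V r = W"
    using exists_chain[OF fin minopen_open[OF fin assms(2)] oW] by blast
  have "y \<in> W" using minopen_mem[OF assms(3)] unfolding W_def by (rule UnI2)
  hence "y \<in> V r" using V(3) by simp
  hence "nested_seq T x V n \<and> r \<le> n \<and> y \<in> V r" using V(1,2) unfolding nested_ochain by blast
  hence "\<exists>U m. nested_seq T x U m \<and> r \<le> m \<and> y \<in> U r" by blast
  hence "Psi T x y \<le> r" unfolding Psi_def by (rule Least_le)
  hence kr: "k \<le> r" using assms(4) by simp
  have "rk T W < rk T (U k)" using strict_rank[OF fin oW oUk WU] .
  moreover have "rk T W = rk T (minopen T x) + r" using chain_rank[OF fin V(1) V(2)] V(3) by simp
  moreover have "rk T (U k) = rk T (minopen T x) + k" using chain_rank[OF fin ch assms(6)] .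
  ultimately show False using kr by simp
qed

end
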